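(* Let $f$ be convex, differentiable, symmetric, $M$-smooth and $(m,r)$-restricted strongly convex, $\kappa=M/m$. Let $X^\star$ be a minimizer of $f$ over $\mathbb{S}^n_+$ with $r\le\mathrm{rank}(X^\star)$, $X^\star_r=U^\star_r(U^\star_r)^\top$ its best rank-$r$ approximation ($U^\star_r\in\mathbb{R}^{n\times r}$), and assume (A3): $\|X^\star-X^\star_r\|_F\le\frac{1}{200\kappa^{1.5}}\frac{\sigma_r(X^\star)}{\sigma_1(X^\star)}\sigma_r(X^\star)$. Let $U\in\mathbb{R}^{n\times r}$ with $\mathrm{Dist}(U,U^\star_r)\le\rho'\sigma_r(U^\star_r)$, $\rho'=\frac{1}{100\kappa}\frac{\sigma_r(X^\star)}{\sigma_1(X^\star)}$; let $X=UU^\top$, $\Delta=U-U^\star_rR_U^\star$ and $\hat\eta=\frac{1}{16(M\|X\|_2+\|\nabla f(X)Q_UQ_U^\top\|_2)}$. Then $$\langle\nabla f(X),\Delta\Delta^\top\rangle\ge-\tfrac{2\hat\eta}{25}\|\nabla f(X)U\|_F^2-\Big(\tfrac{m\,\sigma_r(X^\star)}{20}+M\|X^\star-X^\star_r\|_F\Big)\mathrm{Dist}(U,U^\star_r)^2.$$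
   Context: $\mathbb{S}^n_+$ is the cone of $n\times n$ PSD matrices. For a matrix $A$, $\sigma_i(A)$ is its $i$-th largest singular value, $\|A\|_2=\sigma_1(A)$, $\|A\|_F$ the Frobenius norm, $\langle A,B\rangle=\mathrm{tr}(A^\top B)$. $Q_U$ is a matrix whose columns form an orthonormal basis of the column space of $U$. For $U,V\in\mathbb{R}^{n\times r}$, $\mathrm{Dist}(U,V)=\min_{R\in\mathcal{O}_r}\|U-VR\|_F$, $\mathcal{O}_r$ the $r\times r$ orthogonal matrices; $R_U^\star$ is a minimizer in $\mathrm{Dist}(U,U^\star_r)$. $f$ symmetric: $f(X)=f(X^\top)$. $M$-smooth: $\|\nabla f(X)-\nabla f(Y)\|_F\le M\|X-Y\|_F$ for $X,Y\in\mathbb{S}^n_+$. $(m,r)$-restricted strongly convex: $f(Y)\ge f(X)+\langle\nabla f(X),Y-X\rangle+\frac m2\|Y-X\|_F^2$ for all $X,Y\in\mathbb{S}^n_+$ of rank at most $r$. *)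

theory Defs
  imports "HOL-Analysis.Analysis"
begin

text \<open>Matrices are real^'c^'r (rows indexed by 'r, columns by 'c). On this type the
  built-in inner product is the Frobenius inner product tr(A^T B) and norm is the
  Frobenius norm.\<close>

definition psd :: "real^'n^'n \<Rightarrow> bool" where
  "psd X \<longleftrightarrow> transpose X = X \<and> (\<forall>v. 0 \<le> v \<bullet> (X *v v))"

text \<open>k-th largest singular value (k \<ge> 1), Courant-Fischer max-min form.\<close>
definition sigma :: "nat \<Rightarrow> real^'c^'r \<Rightarrow> real" where
  "sigma k A = Sup {Inf ((\<lambda>v. norm (A *v v)) ` {v \<in> V. norm v = 1}) | V.
                      subspace V \<and> dim V = k}"

definition Dist :: "real^'r^'n \<Rightarrow> real^'r^'n \<Rightarrow> real" where
  "Dist U V = Inf {norm (U - V ** R) | R. orthogonal_matrix R}"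

end

theory Submission
  imports Defs
begin


lemma normsq_vec: "(norm (x::real^'n))\<^sup>2 = (\<Sum>i\<in>UNIV. (x$i)\<^sup>2)"
  by (simp add: norm_vec_def L2_set_def sum_nonneg)

lemma normsq_mat: "(norm (x::real^'c^'n))\<^sup>2 = (\<Sum>i\<in>UNIV. (norm (x$i))\<^sup>2)"
  by (simp add: norm_vec_def L2_set_def sum_nonneg)

lemma mv_bound: "norm ((A::real^'c^'r) *v x) \<le> norm A * norm x"
proof -
  have "(norm (A *v x))\<^sup>2 = (\<Sum>i\<in>UNIV. (A$i \<bullet> x)\<^sup>2)"
    unfolding normsq_vec by (simp add: matrix_vector_mult_def inner_vec_def mult.commute)
  also have "\<dots> \<le> (\<Sum>i\<in>UNIV. (norm (A$i))\<^sup>2 * (norm x)\<^sup>2)"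
    apply (rule sum_mono)
  proof -
    fix i
    have "\<bar>A$i \<bullet> x\<bar> \<le> norm (A$i) * norm x" by (rule Cauchy_Schwarz_ineq2)
    then have "\<bar>A$i \<bullet> x\<bar>\<^sup>2 \<le> (norm (A$i) * norm x)\<^sup>2" by (rule power_mono) simp
    then show "(A$i \<bullet> x)\<^sup>2 \<le> (norm (A$i))\<^sup>2 * (norm x)\<^sup>2" by (simp add: power_mult_distrib)
  qed
  also have "\<dots> = (norm A * norm x)\<^sup>2"
    by (simp add: normsq_mat[of A] power_mult_distrib sum_distrib_right)
  finally show ?thesis
    using power2_le_imp_le by force
qed

lemma unit_in_subspace:
  assumes "subspace V" "dim V = k" "1 \<le> k"
  shows "\<exists>v\<in>V. norm (v::'a::euclidean_space) = 1"
proof -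
  have "\<not> V \<subseteq> {0}" using assms dim_eq_0[of V] by simp
  then obtain x where x: "x \<in> V" "x \<noteq> 0" by auto
  then have "(1/norm x) *\<^sub>R x \<in> V" using assms(1) subspace_scale by blast
  moreover have "norm ((1/norm x) *\<^sub>R x) = 1" using x by simp
  ultimately show ?thesis by blast
qed

lemma elem_bounds:
  fixes A :: "real^'c^'r"
  assumes "subspace V" "dim V = k" "1 \<le> k"
    and B: "\<And>v. norm v = 1 \<Longrightarrow> norm (A *v v) \<le> B"
  shows "0 \<le> Inf ((\<lambda>v. norm (A *v v)) ` {v \<in> V. norm v = 1})"
    "Inf ((\<lambda>v. norm (A *v v)) ` {v \<in> V. norm v = 1}) \<le> B"
proof -
  obtain v where v: "v \<in> V" "norm v = 1" using unit_in_subspace assms by blast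
  let ?S = "(\<lambda>v. norm (A *v v)) ` {v \<in> V. norm v = 1}"
  have ne: "?S \<noteq> {}" using v by auto
  show "0 \<le> Inf ?S" by (rule cInf_greatest[OF ne]) auto
  have "Inf ?S \<le> norm (A *v v)"
    by (rule cInf_lower) (use v in \<open>auto intro: bdd_belowI[where m=0]\<close>)
  also have "\<dots> \<le> B" using B v by auto
  finally show "Inf ?S \<le> B" .
qed

lemma sigma_set_ne:
  assumes "k \<le> CARD('c)"
  shows "\<exists>V. subspace (V::(real^'c) set) \<and> dim V = k"
proof -
  have "k \<le> dim (UNIV::(real^'c) set)" using assms by (simp add: dim_UNIV)
  then show ?thesis using choose_subspace_of_subspace by metis
qed

lemma sigma_ub:
  fixes A :: "real^'c^'r"
  assumes "1 \<le> k" "k \<le> CARD('c)" and B: "\<And>v. norm v = 1 \<Longrightarrow> norm (A *v v) \<le> B"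
  shows "sigma k A \<le> B" "0 \<le> sigma k A"
proof -
  let ?T = "{Inf ((\<lambda>v. norm (A *v v)) ` {v \<in> V. norm v = 1}) | V.
                      subspace V \<and> dim V = k}"
  obtain V where V: "subspace (V::(real^'c) set)" "dim V = k" using sigma_set_ne assms(2) by blast
  have ne: "?T \<noteq> {}" using V by blast
  show "sigma k A \<le> B" unfolding sigma_def
    by (rule cSup_least[OF ne]) (use elem_bounds(2)[OF _ _ assms(1) B] in blast)
  have bdd: "bdd_above ?T"
    by (rule bdd_aboveI[where M=B]) (use elem_bounds(2)[OF _ _ assms(1) B] in blast)
  have "0 \<le> Inf ((\<lambda>v. norm (A *v v)) ` {v \<in> V. norm v = 1})"
    using elem_bounds(1)[OF V assms(1) B] .
  also have "\<dots> \<le> sigma k A" unfolding sigma_def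
    by (rule cSup_upper[OF _ bdd]) (use V in blast)
  finally show "0 \<le> sigma k A" .
qed

lemma sigma1_ge:
  fixes A :: "real^'c^'r"
  assumes "norm v = 1"
  shows "norm (A *v v) \<le> sigma 1 A"
proof -
  let ?T = "{Inf ((\<lambda>v. norm (A *v v)) ` {v \<in> V. norm v = 1}) | V.
                      subspace V \<and> dim V = 1}"
  have Bn: "\<And>w. norm w = 1 \<Longrightarrow> norm (A *v w) \<le> norm A" using mv_bound
    by (metis mult.right_neutral)
  have bdd: "bdd_above ?T"
    by (rule bdd_aboveI[where M="norm A"]) (use elem_bounds(2)[OF _ _ _ Bn] in auto)
  let ?V = "span {v}"
  have v0: "v \<noteq> 0" using assms by auto
  have V: "subspace ?V" "dim ?V = 1" using v0 by (auto simp: dim_span dim_singleton)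
  have ne: "(\<lambda>v. norm (A *v v)) ` {w \<in> ?V. norm w = 1} \<noteq> {}"
    using assms span_base[of v "{v}"] by auto
  have "norm (A *v v) \<le> Inf ((\<lambda>v. norm (A *v v)) ` {w \<in> ?V. norm w = 1})"
  proof (rule cInf_greatest[OF ne])
    fix y assume "y \<in> (\<lambda>v. norm (A *v v)) ` {w \<in> ?V. norm w = 1}"
    then obtain w where w: "w \<in> ?V" "norm w = 1" "y = norm (A *v w)" by auto
    then obtain c where c: "w = c *\<^sub>R v" by (auto simp: span_singleton)
    then have "\<bar>c\<bar> = 1" using w assms by simp
    then show "norm (A *v v) \<le> y" using w c by (simp add: matrix_vector_mult_scaleR)
  qed
  also have "\<dots> \<le> sigma 1 A" unfolding sigma_def
    by (rule cSup_upper[OF _ bdd]) (use V in blast)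
  finally show ?thesis .
qed

lemma sigma1_bound: "norm ((A::real^'c^'r) *v x) \<le> sigma 1 A * norm x"
proof (cases "x = 0")
  case True then show ?thesis by simp
next
  case False
  have "norm (A *v ((1/norm x) *\<^sub>R x)) \<le> sigma 1 A"
    by (rule sigma1_ge) (use False in simp)
  then have "norm (A *v x) / norm x \<le> sigma 1 A"
    by (simp add: matrix_vector_mult_scaleR divide_inverse mult.commute)
  then show ?thesis using False by (simp add: divide_le_eq mult.commute)
qed

lemma sigma1_nonneg: "0 \<le> sigma 1 (A::real^'c^'r)"
proof -
  have "1 \<le> CARD('c)" by (simp add: Suc_leI)
  moreover have "\<And>v. norm v = 1 \<Longrightarrow> norm (A *v v) \<le> norm A" using mv_bound[of A] by (metis mult.right_neutral)
  ultimately show ?thesis using sigma_ub(2)[of 1 A "norm A"] by simp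
qed

lemma sigmak_le1:
  assumes "1 \<le> k" "k \<le> CARD('c)"
  shows "sigma k (A::real^'c^'r) \<le> sigma 1 A" "0 \<le> sigma k A"
  using sigma_ub[OF assms sigma1_ge] by auto




lemma inner_outer_eq:
  fixes G :: "real^'n^'n" and D :: "real^'r^'n"
  shows "G \<bullet> (D ** transpose D) = (\<Sum>k\<in>UNIV. (\<chi> i. D$i$k) \<bullet> (G *v (\<chi> i. D$i$k)))"
proof -
  have "G \<bullet> (D ** transpose D) = (\<Sum>i\<in>UNIV. \<Sum>j\<in>UNIV. \<Sum>k\<in>UNIV. G$i$j * D$i$k * D$j$k)"
    by (simp add: inner_vec_def matrix_matrix_mult_def transpose_def sum_distrib_left mult_ac)
  also have "\<dots> = (\<Sum>i\<in>UNIV. \<Sum>k\<in>UNIV. \<Sum>j\<in>UNIV. G$i$j * D$i$k * D$j$k)"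
    by (rule sum.cong[OF refl], rule sum.swap)
  also have "\<dots> = (\<Sum>k\<in>UNIV. \<Sum>i\<in>UNIV. \<Sum>j\<in>UNIV. G$i$j * D$i$k * D$j$k)"
    by (rule sum.swap)
  also have "\<dots> = (\<Sum>k\<in>UNIV. (\<chi> i. D$i$k) \<bullet> (G *v (\<chi> i. D$i$k)))"
    by (simp add: inner_vec_def matrix_vector_mult_def sum_distrib_left mult_ac)
  finally show ?thesis .
qed

lemma inner_outer_nonneg:
  fixes G :: "real^'n^'n" and D :: "real^'r^'n"
  assumes "\<And>c. 0 \<le> c \<bullet> (G *v c)"
  shows "0 \<le> G \<bullet> (D ** transpose D)"
  unfolding inner_outer_eq by (rule sum_nonneg) (rule assms)

lemma inner_rank1:
  fixes G :: "real^'n^'n"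
  shows "G \<bullet> (\<chi> i j. c$i * c$j) = c \<bullet> (G *v c)"
  by (simp add: inner_vec_def matrix_vector_mult_def sum_distrib_left mult_ac)

lemma inner_transpose_mv: "v \<bullet> ((U::real^'c^'r) *v w) = (transpose U *v v) \<bullet> w"
  by (simp add: transpose_matrix_vector dot_lmul_matrix)

lemma psd_outer: "psd ((U::real^'r^'n) ** transpose U)"
  unfolding psd_def
proof (intro conjI allI)
  show "transpose (U ** transpose U) = U ** transpose U"
    by (simp add: matrix_transpose_mul)
  fix v
  have "v \<bullet> ((U ** transpose U) *v v) = (transpose U *v v) \<bullet> (transpose U *v v)"
    by (simp add: inner_transpose_mv matrix_vector_mul_assoc[symmetric])
  then show "0 \<le> v \<bullet> ((U ** transpose U) *v v)" by simp
qed

lemma psd_add_rank1: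
  assumes "psd X" "0 \<le> t"
  shows "psd (X + t *\<^sub>R (\<chi> i j. c$i * c$j))"
  unfolding psd_def
proof (intro conjI allI)
  show "transpose (X + t *\<^sub>R (\<chi> i j. c$i * c$j)) = X + t *\<^sub>R (\<chi> i j. c$i * c$j)"
  proof -
    have "transpose X = X" using assms(1) unfolding psd_def by simp
    then have s: "\<And>i j. X$j$i = X$i$j" unfolding transpose_def vec_eq_iff by simp
    show ?thesis unfolding transpose_def vec_eq_iff by (simp add: s mult.commute)
  qed
  fix v
  have "v \<bullet> ((X + t *\<^sub>R (\<chi> i j. c$i * c$j)) *v v) = v \<bullet> (X *v v) + t * (c \<bullet> v)\<^sup>2"
    by (simp add: matrix_vector_mult_def inner_vec_def sum_distrib_left sum_distrib_right
        algebra_simps power2_eq_square sum.distrib)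
  then show "0 \<le> v \<bullet> ((X + t *\<^sub>R (\<chi> i j. c$i * c$j)) *v v)"
    using assms unfolding psd_def by simp
qed




lemma norm_orth: assumes "orthogonal_matrix (R::real^'r^'r)" shows "norm (R *v v) = norm v"
proof -
  have "(R *v v) \<bullet> (R *v v) = (transpose R *v (R *v v)) \<bullet> v" by (rule inner_transpose_mv)
  also have "\<dots> = v \<bullet> v" using assms
    by (simp add: matrix_vector_mul_assoc orthogonal_matrix_def inner_commute)
  finally show ?thesis by (simp add: norm_eq_sqrt_inner)
qed

lemma sigma1_orth: assumes "orthogonal_matrix (R::real^'r^'r)"
  shows "sigma 1 ((A::real^'r^'n) ** R) \<le> sigma 1 A"
proof (rule sigma_ub(1))
  show "1 \<le> (1::nat)" by simp
  show "1 \<le> CARD('r)" by (simp add: Suc_leI)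
  fix v :: "real^'r" assume "norm v = 1"
  then show "norm ((A ** R) *v v) \<le> sigma 1 A"
    using sigma1_ge[of "R *v v" A] norm_orth[OF assms, of v]
    by (simp add: matrix_vector_mul_assoc[symmetric])
qed

lemma sigma1_le_norm: "sigma 1 (A::real^'c^'r) \<le> norm A"
proof (rule sigma_ub(1))
  show "1 \<le> (1::nat)" by simp
  show "1 \<le> CARD('c)" by (simp add: Suc_leI)
  fix v :: "real^'c" assume "norm v = 1"
  then show "norm (A *v v) \<le> norm A" using mv_bound[of A v] by simp
qed

lemma norm_mult_transpose:
  fixes A B :: "real^'r^'n"
  shows "norm (A ** transpose B) \<le> norm A * sigma 1 B"
proof -
  have row: "(A ** transpose B)$i = B *v (A$i)" for i
    by (simp add: vec_eq_iff matrix_matrix_mult_def matrix_vector_mult_def transpose_def mult.commute)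
  have "(norm (A ** transpose B))\<^sup>2 = (\<Sum>i\<in>UNIV. (norm (B *v A$i))\<^sup>2)"
    unfolding normsq_mat row ..
  also have "\<dots> \<le> (\<Sum>i\<in>UNIV. (sigma 1 B)\<^sup>2 * (norm (A$i))\<^sup>2)"
  proof (rule sum_mono)
    fix i
    have "norm (B *v A$i) \<le> sigma 1 B * norm (A$i)" by (rule sigma1_bound)
    then have "(norm (B *v A$i))\<^sup>2 \<le> (sigma 1 B * norm (A$i))\<^sup>2" by (rule power_mono) simp
    then show "(norm (B *v A$i))\<^sup>2 \<le> (sigma 1 B)\<^sup>2 * (norm (A$i))\<^sup>2" by (simp add: power_mult_distrib)
  qed
  also have "\<dots> = (norm A * sigma 1 B)\<^sup>2"
    by (simp add: normsq_mat[of A] power_mult_distrib sum_distrib_left mult.commute)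
  finally show ?thesis
    using power2_le_imp_le sigma1_nonneg[of B] by force
qed

lemma norm_transpose: "norm (transpose (A::real^'c^'r)) = norm A"
proof -
  have "(norm (transpose A))\<^sup>2 = (norm A)\<^sup>2"
    unfolding normsq_mat normsq_vec by (simp add: transpose_def) (rule sum.swap)
  then show ?thesis by (simp add: power2_eq_iff_nonneg)
qed

lemma grad_psd:
  fixes f :: "real^'n^'n \<Rightarrow> real" and gf :: "real^'n^'n \<Rightarrow> real^'n^'n"
  assumes grad: "\<And>X. (f has_derivative (\<lambda>H. gf X \<bullet> H)) (at X)"
    and Xp: "psd Xs" and mn: "\<And>Y. psd Y \<Longrightarrow> f Xs \<le> f Y"
  shows "0 \<le> c \<bullet> (gf Xs *v c)"
proof (rule ccontr)
  assume neg: "\<not> 0 \<le> c \<bullet> (gf Xs *v c)"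
  define P where "P = ((\<chi> i j. c$i * c$j) :: real^'n^'n)"
  define g where "g = (\<lambda>t::real. f (Xs + t *\<^sub>R P))"
  have d1: "((\<lambda>t::real. Xs + t *\<^sub>R P) has_derivative (\<lambda>t. t *\<^sub>R P)) (at 0)"
    by (auto intro!: derivative_eq_intros)
  have d2: "(f has_derivative (\<lambda>H. gf Xs \<bullet> H)) (at ((\<lambda>t::real. Xs + t *\<^sub>R P) 0))"
    using grad[of Xs] by simp
  have "(g has_derivative ((\<lambda>H. gf Xs \<bullet> H) \<circ> (\<lambda>t. t *\<^sub>R P))) (at 0)"
    unfolding g_def using diff_chain_at[OF d1 d2] by (simp add: o_def)
  then have "(g has_real_derivative (gf Xs \<bullet> P)) (at 0)"
    by (rule has_derivative_imp_has_field_derivative) (simp add: o_def)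
  moreover have "gf Xs \<bullet> P < 0" using neg unfolding P_def inner_rank1 by simp
  ultimately obtain d where d: "d > 0" "\<forall>h>0. h < d \<longrightarrow> g (0 + h) < g 0"
    using DERIV_neg_dec_right by blast
  then have "g (d/2) < g 0" by auto
  moreover have "g 0 \<le> g (d/2)" unfolding g_def using mn psd_add_rank1[OF Xp, of "d/2" c] d(1)
    by (simp add: P_def)
  ultimately show False by simp
qed

lemma final_arith:
  fixes m M s q u1 a e :: real
  assumes "0 < m" "m \<le> M" "0 < s" "0 \<le> q" "q \<le> s" "0 \<le> u1" "0 \<le> a"
    "a \<le> (1/(100*(M/m)) * (q/s)) * u1" "0 \<le> e"
    "e \<le> 1/(200*(M/m) powr 1.5) * (q/s) * q" "u1\<^sup>2 \<le> s + e"
  shows "M*(2*a*u1 + a\<^sup>2) \<le> m*q/20"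
proof -
  define k where "k = M/m"
  have k1: "1 \<le> k" unfolding k_def using assms by simp
  have kp: "1 \<le> k powr 1.5" using k1 ge_one_powr_ge_zero by simp
  define p where "p = 1/(100*k) * (q/s)"
  have p0: "0 \<le> p" unfolding p_def using k1 assms by simp
  have "q/s \<le> 1" using assms by simp
  have sk: "s \<le> k * s" using k1 assms by simp
  have p1: "p \<le> 1/100" unfolding p_def using k1 assms
    by (simp add: field_simps) (use sk assms(5) in linarith)
  have "e \<le> 1/(200*k powr 1.5) * (q/s) * q" using assms k_def by simp
  also have "\<dots> \<le> 1/200 * (q/s) * q"
  proof -
    have c: "1/(200*k powr 1.5) \<le> 1/200" using kp by (intro divide_left_mono) auto
    show ?thesis using assms by (intro mult_right_mono c) auto
  qed
  also have "\<dots> \<le> 1/200 * s" using assms by (simp add: field_simps) (smt (verit) mult_mono)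
  finally have e1: "e \<le> s/200" by simp
  have u: "u1\<^sup>2 \<le> 201/200 * s" using e1 assms by simp
  have a1: "a \<le> p * u1" using assms unfolding p_def k_def by simp
  have "a*u1 \<le> (p*u1)*u1" using a1 assms(6) by (rule mult_right_mono)
  then have au: "a*u1 \<le> p*u1\<^sup>2" by (simp add: power2_eq_square mult.assoc)
  have "a\<^sup>2 \<le> (p*u1)\<^sup>2" using a1 assms by (intro power_mono) auto
  have "p*p \<le> (1/100)*p" using mult_right_mono[OF p1 p0] .
  then have "(p*p)*u1\<^sup>2 \<le> ((1/100)*p)*u1\<^sup>2" by (rule mult_right_mono) simp
  then have "(p*u1)\<^sup>2 \<le> p*u1\<^sup>2/100" by (simp add: power_mult_distrib power2_eq_square mult_ac)
  with \<open>a\<^sup>2 \<le> (p*u1)\<^sup>2\<close> have "a\<^sup>2 \<le> p*u1\<^sup>2/100" by linarith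
  with au have "2*a*u1 + a\<^sup>2 \<le> 201/100 * p * u1\<^sup>2" by simp
  also have "\<dots> \<le> 201/100 * p * (201/200 * s)" using mult_left_mono[OF u, of "201/100*p"] p0 by simp
  finally have b: "2*a*u1 + a\<^sup>2 \<le> 201/100 * 201/200 * (p* s)" by simp
  have ps: "M * (p* s) = m*q/100" unfolding p_def k_def using assms by (simp add: field_simps)
  have "M*(2*a*u1 + a\<^sup>2) \<le> M * (201/100 * 201/200 * (p* s))"
    using b assms by (intro mult_left_mono) auto
  also have "\<dots> = 201/100 * 201/200 * (m*q/100)" using ps by simp
  also have "\<dots> \<le> m*q/20" using assms by simp
  finally show ?thesis .
qed




lemma mm_radd: "((A::real^'m^'n) + B) ** (C::real^'k^'m) = A ** C + B ** C"
  by (simp add: vec_eq_iff matrix_matrix_mult_def sum.distrib distrib_right)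

lemma tr_add: "transpose ((A::real^'m^'n) + B) = transpose A + transpose B"
  by (simp add: vec_eq_iff transpose_def)

theorem lemma6p3:
  fixes f :: "real^'n^'n \<Rightarrow> real"
    and gf :: "real^'n^'n \<Rightarrow> real^'n^'n"
    and M m :: real
    and Xstar :: "real^'n^'n"
    and Ustar U :: "real^'r^'n"
    and R :: "real^'r^'r"
    and Q :: "real^'k^'n"
  assumes grad: "\<And>X. (f has_derivative (\<lambda>H. gf X \<bullet> H)) (at X)"
    and conv: "convex_on UNIV f"
    and symm: "\<And>X. f X = f (transpose X)"
    and m_pos: "0 < m"
    and smooth: "\<And>X Y. psd X \<Longrightarrow> psd Y \<Longrightarrow> norm (gf X - gf Y) \<le> M * norm (X - Y)"
    and rsc: "\<And>X Y. psd X \<Longrightarrow> psd Y \<Longrightarrow> rank X \<le> CARD('r) \<Longrightarrow> rank Y \<le> CARD('r) \<Longrightarrow>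
                f Y \<ge> f X + gf X \<bullet> (Y - X) + m / 2 * (norm (Y - X))\<^sup>2"
    and Xstar_psd: "psd Xstar"
    and Xstar_min: "\<And>Y. psd Y \<Longrightarrow> f Xstar \<le> f Y"
    and r_le: "CARD('r) \<le> rank Xstar"
    and best_rank: "rank (Ustar ** transpose Ustar) \<le> CARD('r)"
    and best_approx: "\<And>Y. rank Y \<le> CARD('r) \<Longrightarrow>
                norm (Xstar - Ustar ** transpose Ustar) \<le> norm (Xstar - Y)"
    and A3: "norm (Xstar - Ustar ** transpose Ustar)
              \<le> 1 / (200 * (M / m) powr 1.5) * (sigma (CARD('r)) Xstar / sigma 1 Xstar)
                 * sigma (CARD('r)) Xstar"
    and U_close: "Dist U Ustar \<le> (1 / (100 * (M / m)) * (sigma (CARD('r)) Xstar / sigma 1 Xstar))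
                    * sigma (CARD('r)) Ustar"
    and R_orth: "orthogonal_matrix R"
    and R_min: "norm (U - Ustar ** R) = Dist U Ustar"
    and Q_orth: "transpose Q ** Q = mat 1"
    and Q_span: "span (columns Q) = span (columns U)"
  shows "let X = U ** transpose U; \<Delta> = U - Ustar ** R;
             \<eta> = 1 / (16 * (M * sigma 1 X + sigma 1 (gf X ** Q ** transpose Q)))
         in gf X \<bullet> (\<Delta> ** transpose \<Delta>)
            \<ge> - (2 * \<eta> / 25) * (norm (gf X ** U))\<^sup>2
              - (m * sigma (CARD('r)) Xstar / 20 + M * norm (Xstar - Ustar ** transpose Ustar))
                * (Dist U Ustar)\<^sup>2"
proof -
  define X where "X = U ** transpose U"
  define D where "D = U - Ustar ** R"
  define V where "V = Ustar ** R"
  define Xr where "Xr = Ustar ** transpose Ustar"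
  define a where "a = Dist U Ustar"
  define e where "e = norm (Xstar - Xr)"
  define s where "s = sigma 1 Xstar"
  define q where "q = sigma (CARD('r)) Xstar"
  define u1 where "u1 = sigma 1 Ustar"
  define ur where "ur = sigma (CARD('r)) Ustar"
  define rho where "rho = 1 / (100 * (M / m)) * (q / s)"
  have aD: "a = norm D" using R_min unfolding D_def a_def by simp
  have a0: "0 \<le> a" using aD by simp
  have e0: "0 \<le> e" unfolding e_def by simp
  have psd0: "psd (0::real^'n^'n)" unfolding psd_def by (simp add: transpose_def vec_eq_iff)
  have psd1: "psd (mat 1::real^'n^'n)" unfolding psd_def by (simp add: transpose_mat matrix_vector_mul_lid)
  have M0: "0 \<le> M"
  proof -
    have "(mat 1::real^'n^'n) \<noteq> 0"
    proof
      fix i :: 'n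
      assume "(mat 1::real^'n^'n) = 0"
      then have "(mat 1::real^'n^'n)$i$i = 0" by simp
      then show False by (simp add: mat_def)
    qed
    then have n1: "0 < norm (0 - mat 1::real^'n^'n)" by simp
    have "0 \<le> M * norm (0 - mat 1::real^'n^'n)" using smooth[OF psd0 psd1] norm_ge_zero order_trans by blast
    then show ?thesis using n1 by (simp add: zero_le_mult_iff)
  qed
  have XP: "psd X" unfolding X_def by (rule psd_outer)
  have XrP: "psd Xr" unfolding Xr_def by (rule psd_outer)
  have cr: "1 \<le> CARD('r)" by (simp add: Suc_leI)
  have crn: "CARD('r) \<le> CARD('n)" using r_le rank_bound[of Xstar] by simp
  have qs: "q \<le> s" "0 \<le> q" unfolding q_def s_def using sigmak_le1[OF cr crn] by auto
  have us: "ur \<le> u1" unfolding ur_def u1_def using sigmak_le1[OF cr order_refl] by auto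
  have u10: "0 \<le> u1" unfolding u1_def by (rule sigma1_nonneg)
  have rho0: "0 \<le> rho" unfolding rho_def using qs M0 m_pos s_def sigma1_nonneg[of Xstar] by simp
  have a_rho: "a \<le> rho * u1"
  proof -
    have "a \<le> rho * ur" using U_close unfolding a_def rho_def q_def s_def ur_def .
    also have "\<dots> \<le> rho * u1" using us rho0 by (rule mult_left_mono)
    finally show ?thesis .
  qed
  have Gs_psd: "\<And>c. 0 \<le> c \<bullet> (gf Xstar *v c)"
    using grad_psd[OF grad Xstar_psd Xstar_min] .
  have DD: "norm (D ** transpose D) \<le> a\<^sup>2"
  proof -
    have "norm (D ** transpose D) \<le> norm D * sigma 1 D" by (rule norm_mult_transpose)
    also have "\<dots> \<le> norm D * norm D" by (rule mult_left_mono[OF sigma1_le_norm]) simp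
    finally show ?thesis using aD by (simp add: power2_eq_square)
  qed
  have key1: "gf X \<bullet> (D ** transpose D) \<ge> - (M * norm (X - Xstar) * a\<^sup>2)"
  proof -
    have "gf X \<bullet> (D ** transpose D) = gf Xstar \<bullet> (D ** transpose D) + (gf X - gf Xstar) \<bullet> (D ** transpose D)"
      by (simp add: inner_diff_left)
    moreover have "0 \<le> gf Xstar \<bullet> (D ** transpose D)" by (rule inner_outer_nonneg[OF Gs_psd])
    moreover have "- ((gf X - gf Xstar) \<bullet> (D ** transpose D)) \<le> norm (gf X - gf Xstar) * norm (D ** transpose D)"
      using norm_cauchy_schwarz[of "gf Xstar - gf X" "D ** transpose D"] by (simp add: inner_diff_left norm_minus_commute)
    moreover have "norm (gf X - gf Xstar) * norm (D ** transpose D) \<le> (M * norm (X - Xstar)) * a\<^sup>2"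
      by (rule mult_mono[OF smooth[OF XP Xstar_psd] DD]) (use M0 in auto)
    ultimately show ?thesis by linarith
  qed
  have key2: "norm (X - Xstar) \<le> norm (X - Xr) + e"
  proof -
    have "X - Xstar = (X - Xr) + (Xr - Xstar)" by simp
    then have "norm (X - Xstar) \<le> norm (X - Xr) + norm (Xr - Xstar)" using norm_triangle_ineq[of "X - Xr" "Xr - Xstar"] by simp
    then show ?thesis unfolding e_def by (simp add: norm_minus_commute)
  qed
  have key3: "norm (X - Xr) \<le> 2*a*u1 + a\<^sup>2"
  proof -
    have RR: "R ** transpose R = mat 1" using R_orth unfolding orthogonal_matrix_def by simp
    have "V ** transpose V = Ustar ** (R ** transpose R) ** transpose Ustar" unfolding V_def
      by (simp add: matrix_transpose_mul matrix_mul_assoc)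
    then have XrV: "Xr = V ** transpose V" using RR by (simp add: matrix_mul_rid Xr_def)
    have UV: "U = V + D" unfolding V_def D_def by simp
    have exp: "X - Xr = D ** transpose V + V ** transpose D + D ** transpose D"
      unfolding X_def XrV UV by (simp add: matrix_add_ldistrib mm_radd tr_add algebra_simps)
    have sV: "sigma 1 V \<le> u1" unfolding V_def u1_def by (rule sigma1_orth[OF R_orth])
    have n1: "norm (D ** transpose V) \<le> a * u1"
    proof -
      have "norm (D ** transpose V) \<le> norm D * sigma 1 V" by (rule norm_mult_transpose)
      also have "\<dots> \<le> a * u1" using aD sV by (simp add: mult_left_mono)
      finally show ?thesis .
    qed
    have n2: "norm (V ** transpose D) = norm (D ** transpose V)"
      using norm_transpose[of "D ** transpose V"] by (simp add: matrix_transpose_mul transpose_transpose)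
    have "norm (X - Xr) \<le> norm (D ** transpose V) + norm (V ** transpose D) + norm (D ** transpose D)"
      unfolding exp using norm_triangle_ineq[of "D ** transpose V + V ** transpose D" "D ** transpose D"]
        norm_triangle_ineq[of "D ** transpose V" "V ** transpose D"] by linarith
    then show ?thesis using n1 n2 DD by simp
  qed
  have sXr: "sigma 1 Xr \<le> s + e"
  proof (rule sigma_ub(1)[OF order_refl])
    show "1 \<le> CARD('n)" by (simp add: Suc_leI)
    fix v :: "real^'n" assume v: "norm v = 1"
    have "Xr *v v = Xstar *v v + (Xr - Xstar) *v v" by (simp add: matrix_vector_mult_diff_rdistrib)
    then have "norm (Xr *v v) \<le> norm (Xstar *v v) + norm ((Xr - Xstar) *v v)" using norm_triangle_ineq[of "Xstar *v v" "(Xr - Xstar) *v v"] by simp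
    moreover have "norm (Xstar *v v) \<le> s" unfolding s_def using sigma1_ge[OF v] .
    moreover have "norm ((Xr - Xstar) *v v) \<le> e"
      using mv_bound[of "Xr - Xstar" v] v unfolding e_def by (simp add: norm_minus_commute)
    ultimately show "norm (Xr *v v) \<le> s + e" by linarith
  qed
  have u1sq: "u1\<^sup>2 \<le> sigma 1 Xr"
  proof -
    have "u1 \<le> sqrt (sigma 1 Xr)" unfolding u1_def
    proof (rule sigma_ub(1)[OF order_refl cr])
      fix w :: "real^'r" assume w: "norm w = 1"
      define y where "y = Ustar *v w"
      have "(norm y)\<^sup>2 = y \<bullet> (Ustar *v w)" unfolding y_def by (simp add: power2_norm_eq_inner)
      also have "\<dots> = (transpose Ustar *v y) \<bullet> w" by (rule inner_transpose_mv)
      also have "\<dots> \<le> norm (transpose Ustar *v y)" using norm_cauchy_schwarz[of "transpose Ustar *v y" w] w by simp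
      finally have h1: "(norm y)\<^sup>2 \<le> norm (transpose Ustar *v y)" .
      have "(norm (transpose Ustar *v y))\<^sup>2 = (transpose Ustar *v y) \<bullet> (transpose Ustar *v y)"
        by (simp add: power2_norm_eq_inner)
      also have "\<dots> = y \<bullet> (Ustar *v (transpose Ustar *v y))" by (rule inner_transpose_mv[symmetric])
      also have "\<dots> = y \<bullet> (Xr *v y)" unfolding Xr_def by (simp only: matrix_vector_mul_assoc)
      also have "\<dots> \<le> norm y * norm (Xr *v y)" by (rule norm_cauchy_schwarz)
      also have "\<dots> \<le> norm y * (sigma 1 Xr * norm y)" by (rule mult_left_mono[OF sigma1_bound]) simp
      finally have h2: "(norm (transpose Ustar *v y))\<^sup>2 \<le> sigma 1 Xr * (norm y)\<^sup>2"
        by (simp add: power2_eq_square mult_ac)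
      have sX0: "0 \<le> sigma 1 Xr" by (rule sigma1_nonneg)
      have "(norm y)\<^sup>2 \<le> sigma 1 Xr"
      proof (cases "norm y = 0")
        case True then show ?thesis using sX0 by simp
      next
        case False
        have "((norm y)\<^sup>2)\<^sup>2 \<le> (norm (transpose Ustar *v y))\<^sup>2"
          using h1 by (rule power_mono) simp
        with h2 have hh: "(norm y)\<^sup>2 * (norm y)\<^sup>2 \<le> sigma 1 Xr * (norm y)\<^sup>2"
          by (simp add: power2_eq_square)
        have pos: "0 < (norm y)\<^sup>2" using False by simp
        show ?thesis using mult_right_le_imp_le[OF hh pos] .
      qed
      then show "norm (Ustar *v w) \<le> sqrt (sigma 1 Xr)" unfolding y_def
        using real_le_rsqrt by blast
    qed
    then have "u1\<^sup>2 \<le> (sqrt (sigma 1 Xr))\<^sup>2" using u10 by (rule power_mono)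
    then show ?thesis using sigma1_nonneg[of Xr] by simp
  qed
  have key4: "M * (2*a*u1 + a\<^sup>2) \<le> m * q / 20"
  proof (cases "a = 0")
    case True then show ?thesis using qs m_pos by simp
  next
    case False
    then have apos: "0 < a" using a0 by simp
    have s_pos: "0 < s"
    proof (rule ccontr)
      assume "\<not> 0 < s"
      then have "s = 0" using sigma1_nonneg[of Xstar] unfolding s_def by simp
      then have "rho = 0" unfolding rho_def by simp
      then show False using a_rho apos by simp
    qed
    have u1pos: "0 < u1"
    proof (rule ccontr)
      assume "\<not> 0 < u1" then have "u1 = 0" using u10 by simp
      then show False using a_rho apos by simp
    qed
    have Xr_ne: "Xr \<noteq> 0"
    proof
      assume "Xr = 0"
      then have "sigma 1 Xr \<le> 0"
        using sigma_ub(1)[OF order_refl, of "Xr" 0] by (simp add: Suc_leI)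
      then show False using u1sq u1pos by (smt (verit) zero_less_power)
    qed
    have mM: "m \<le> M"
    proof -
      have r0: "rank (0::real^'n^'n) \<le> CARD('r)" by (simp add: rank_0)
      have br: "rank Xr \<le> CARD('r)" using best_rank unfolding Xr_def .
      have i1: "f Xr \<ge> f 0 + gf 0 \<bullet> (Xr - 0) + m / 2 * (norm (Xr - 0))\<^sup>2" by (rule rsc[OF psd0 XrP r0 br])
      have i2: "f 0 \<ge> f Xr + gf Xr \<bullet> (0 - Xr) + m / 2 * (norm (0 - Xr))\<^sup>2" by (rule rsc[OF XrP psd0 br r0])
      have "m * (norm Xr)\<^sup>2 \<le> (gf Xr - gf 0) \<bullet> Xr"
        using i1 i2 by (simp add: inner_diff_left inner_diff_right)
      also have "\<dots> \<le> norm (gf Xr - gf 0) * norm Xr" by (rule norm_cauchy_schwarz)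
      also have "\<dots> \<le> (M * norm (Xr - 0)) * norm Xr" by (rule mult_right_mono[OF smooth[OF XrP psd0]]) simp
      finally have "m * (norm Xr)\<^sup>2 \<le> M * (norm Xr)\<^sup>2" by (simp add: power2_eq_square)
      then show ?thesis using Xr_ne by simp
    qed
    have eA: "e \<le> 1/(200*(M/m) powr 1.5) * (q/s) * q"
      using A3 unfolding e_def q_def s_def Xr_def .
    have "u1\<^sup>2 \<le> s + e" using u1sq sXr by simp
    then show ?thesis
      using final_arith[OF m_pos mM s_pos qs(2) qs(1) u10 a0 _ e0 eA] a_rho unfolding rho_def
      by simp
  qed
  have eta0: "0 \<le> 1 / (16 * (M * sigma 1 X + sigma 1 (gf X ** Q ** transpose Q)))"
    using M0 sigma1_nonneg[of X] sigma1_nonneg[of "gf X ** Q ** transpose Q"] by simp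
  have main: "gf X \<bullet> (D ** transpose D) \<ge> - ((m * q / 20 + M * e) * a\<^sup>2)"
  proof -
    have "M * norm (X - Xstar) \<le> M * (norm (X - Xr) + e)" by (rule mult_left_mono[OF key2 M0])
    also have "\<dots> \<le> M * (2*a*u1 + a\<^sup>2 + e)" using key3 M0 by (simp add: mult_left_mono)
    also have "\<dots> \<le> m * q / 20 + M * e" using key4 by (simp add: distrib_left)
    finally have "M * norm (X - Xstar) * a\<^sup>2 \<le> (m * q / 20 + M * e) * a\<^sup>2"
      by (rule mult_right_mono) simp
    then show ?thesis using key1 by linarith
  qed
  define E where "E = 1 / (16 * (M * sigma 1 X + sigma 1 (gf X ** Q ** transpose Q)))"
  have E0: "- (2 * E / 25) * (norm (gf X ** U))\<^sup>2 \<le> 0" using eta0 unfolding E_def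
    by (simp add: mult_nonneg_nonneg)
  have fin: "gf X \<bullet> (D ** transpose D) \<ge> - (2 * E / 25) * (norm (gf X ** U))\<^sup>2 - (m * q / 20 + M * e) * a\<^sup>2"
    using main E0 by linarith
  show ?thesis
    unfolding Let_def X_def[symmetric] D_def[symmetric] Xr_def[symmetric]
    unfolding e_def[symmetric] a_def[symmetric] q_def[symmetric] E_def[symmetric]
    by (rule fin)
qed


end
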